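(* Under the standing assumptions below, let $\gamma>0$ and let $\{(y^t,z^t,x^t)\}$ be generated by the PR splitting iteration. Then for every $t\ge 1$, \[ \mathcal{P}_\gamma(y^t,z^t,x^t)\ge f(z^t)+g(z^t)+\frac12\left(\frac1\gamma-L\right)\|y^t-z^t\|^2 . \]
   Context: Standing assumptions: $f:\mathbb{R}^n\to\mathbb{R}$ is differentiable and strongly convex with modulus at least $\sigma>0$, and $\nabla f$ is Lipschitz continuous with modulus at most $L>0$. The function $g:\mathbb{R}^n\to(-\infty,\infty]$ is proper and lower semicontinuous, and for the $\gamma>0$ used, $\operatorname{Argmin}_u\{\gamma g(u)+\frac12\|u-w\|^2\}$ is nonempty for every $w\in\mathbb{R}^n$. PR splitting iteration: given $x^0$ and $\gamma>0$, for $t=0,1,2,\dots$: $y^{t+1}=\operatorname{argmin}_y\{f(y)+\frac{1}{2\gamma}\|y-x^t\|^2\}$; $z^{t+1}\in\operatorname{Argmin}_z\{g(z)+\frac{1}{2\gamma}\|2y^{t+1}-x^t-z\|^2\}$; $x^{t+1}=x^t+2(z^{t+1}-y^{t+1})$. Merit function: $\mathcal{P}_\gamma(y,z,x):=f(y)+g(z)-\frac{3}{2\gamma}\|y-z\|^2+\frac{1}{\gamma}\langle x-y,z-y\rangle$. *)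

theory Defs
  imports "HOL-Analysis.Analysis" "HOL-Library.Extended_Real"
begin

definition strongly_convex_with :: "real \<Rightarrow> ('a::real_inner \<Rightarrow> real) \<Rightarrow> bool" where
  "strongly_convex_with \<sigma> f \<longleftrightarrow> convex_on UNIV (\<lambda>x. f x - \<sigma> / 2 * (norm x)\<^sup>2)"

definition proper_fun :: "('a \<Rightarrow> ereal) \<Rightarrow> bool" where
  "proper_fun g \<longleftrightarrow> (\<forall>x. g x \<noteq> -\<infinity>) \<and> (\<exists>x. g x \<noteq> \<infinity>)"

definition lsc_fun :: "('a::topological_space \<Rightarrow> ereal) \<Rightarrow> bool" where
  "lsc_fun g \<longleftrightarrow> (\<forall>x. g x \<le> Liminf (at x) g)"

definition merit :: "('a::real_inner \<Rightarrow> real) \<Rightarrow> ('a \<Rightarrow> ereal) \<Rightarrow> real \<Rightarrow> 'a \<Rightarrow> 'a \<Rightarrow> 'a \<Rightarrow> ereal" where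
  "merit f g \<gamma> y z x = ereal (f y) + g z
     + ereal (- 3 / (2 * \<gamma>) * (norm (y - z))\<^sup>2 + 1 / \<gamma> * inner (x - y) (z - y))"

end

theory Submission imports Defs begin

lemma descent:
  fixes f :: "'a::euclidean_space \<Rightarrow> real" and f' :: "'a \<Rightarrow> 'a"
  assumes f_grad: "\<And>u. (f has_derivative (\<lambda>h. inner (f' u) h)) (at u)"
    and lip: "L-lipschitz_on UNIV f'"
  shows "f z \<le> f y + inner (f' y) (z - y) + L / 2 * (norm (z - y))\<^sup>2"
proof -
  define d where "d = z - y"
  define \<phi> where "\<phi> s = f (y + s *\<^sub>R d) - s * inner (f' y) d - L / 2 * s\<^sup>2 * (norm d)\<^sup>2" for s
  have der: "DERIV \<phi> s :> inner (f' (y + s *\<^sub>R d)) d - inner (f' y) d - L * s * (norm d)\<^sup>2" for s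
  proof -
    have "((\<lambda>s. f (y + s *\<^sub>R d)) has_derivative (\<lambda>h. inner (f' (y + s *\<^sub>R d)) (h *\<^sub>R d))) (at s)"
      by (rule has_derivative_compose[OF _ f_grad]) (auto intro!: derivative_eq_intros)
    hence "((\<lambda>s. f (y + s *\<^sub>R d)) has_real_derivative inner (f' (y + s *\<^sub>R d)) d) (at s)"
      by (simp add: has_field_derivative_def mult_commute_abs)
    then show ?thesis unfolding \<phi>_def
      by (auto intro!: derivative_eq_intros)
  qed
  have L0: "L \<ge> 0" using lip lipschitz_on_nonneg by blast
  have "\<phi> 1 \<le> \<phi> 0"
  proof (rule DERIV_nonpos_imp_nonincreasing[of 0 1 \<phi>])
    fix s :: real assume s: "0 \<le> s" "s \<le> 1"
    have "inner (f' (y + s *\<^sub>R d) - f' y) d \<le> norm (f' (y + s *\<^sub>R d) - f' y) * norm d"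
      by (rule norm_cauchy_schwarz)
    also have "norm (f' (y + s *\<^sub>R d) - f' y) \<le> L * (s * norm d)"
      using lipschitz_onD[OF lip, of "y + s *\<^sub>R d" y] s by (simp add: dist_norm)
    finally have "inner (f' (y + s *\<^sub>R d) - f' y) d \<le> L * s * (norm d)\<^sup>2"
      by (smt (verit) mult_right_mono norm_ge_zero power2_eq_square mult.assoc)
    then show "\<exists>y'. DERIV \<phi> s :> y' \<and> y' \<le> 0"
      using der[of s] by (intro exI[of _ "inner (f' (y + s *\<^sub>R d)) d - inner (f' y) d - L * s * (norm d)\<^sup>2"]) (auto simp: inner_diff_left)
  qed simp
  then show ?thesis unfolding \<phi>_def d_def by simp
qed

lemma optimality:
  fixes f :: "'a::euclidean_space \<Rightarrow> real" and f' :: "'a \<Rightarrow> 'a"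
  assumes f_grad: "\<And>u. (f has_derivative (\<lambda>h. inner (f' u) h)) (at u)"
    and gp: "\<gamma> > 0"
    and mn: "\<forall>v. f yy + 1 / (2 * \<gamma>) * (norm (yy - x))\<^sup>2 \<le> f v + 1 / (2 * \<gamma>) * (norm (v - x))\<^sup>2"
  shows "x - yy = \<gamma> *\<^sub>R f' yy"
proof -
  let ?h = "\<lambda>v. f v + 1 / (2 * \<gamma>) * inner (v - x) (v - x)"
  have hd: "(?h has_derivative (\<lambda>k. inner (f' yy) k + 1 / (2 * \<gamma>) * (inner k (yy - x) + inner (yy - x) k))) (at yy)"
    using gp by (auto intro!: derivative_eq_intros f_grad simp: fun_eq_iff field_simps)
  have "(\<lambda>k. inner (f' yy) k + 1 / (2 * \<gamma>) * (inner k (yy - x) + inner (yy - x) k)) = (\<lambda>v. 0)"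
    apply (rule differential_zero_maxmin[OF _ open_UNIV hd])
    using mn by (auto simp: power2_norm_eq_inner[symmetric])
  hence "inner (f' yy) (f' yy - (1/\<gamma>) *\<^sub>R (x - yy)) + 1 / (2 * \<gamma>) * (inner (f' yy - (1/\<gamma>) *\<^sub>R (x - yy)) (yy - x) + inner (yy - x) (f' yy - (1/\<gamma>) *\<^sub>R (x - yy))) = 0"
    by metis
  hence "inner (f' yy - (1/\<gamma>) *\<^sub>R (x - yy)) (f' yy - (1/\<gamma>) *\<^sub>R (x - yy)) = 0"
    by (simp add: inner_diff_left inner_diff_right inner_commute algebra_simps)
  hence "f' yy = (1/\<gamma>) *\<^sub>R (x - yy)" by simp
  then show ?thesis using gp by simp
qed
theorem mainTheorem3:
  fixes f :: "'a::euclidean_space \<Rightarrow> real"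
    and f' :: "'a \<Rightarrow> 'a"
    and g :: "'a \<Rightarrow> ereal"
    and \<sigma> L \<gamma> :: real
    and y z x :: "nat \<Rightarrow> 'a"
  assumes f_grad: "\<And>u. (f has_derivative (\<lambda>h. inner (f' u) h)) (at u)"
    and sigma_pos: "\<sigma> > 0"
    and f_sc: "strongly_convex_with \<sigma> f"
    and L_pos: "L > 0"
    and f'_lip: "L-lipschitz_on UNIV f'"
    and g_proper: "proper_fun g"
    and g_lsc: "lsc_fun g"
    and gamma_pos: "\<gamma> > 0"
    and prox_nonempty: "\<And>w. \<exists>u. \<forall>v. ereal \<gamma> * g u + ereal ((norm (u - w))\<^sup>2 / 2)
                                  \<le> ereal \<gamma> * g v + ereal ((norm (v - w))\<^sup>2 / 2)"
    and y_step: "\<And>t. \<forall>v. f (y (Suc t)) + 1 / (2 * \<gamma>) * (norm (y (Suc t) - x t))\<^sup>2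
                          \<le> f v + 1 / (2 * \<gamma>) * (norm (v - x t))\<^sup>2"
    and z_step: "\<And>t. \<forall>v. g (z (Suc t)) + ereal (1 / (2 * \<gamma>) * (norm (2 *\<^sub>R y (Suc t) - x t - z (Suc t)))\<^sup>2)
                          \<le> g v + ereal (1 / (2 * \<gamma>) * (norm (2 *\<^sub>R y (Suc t) - x t - v))\<^sup>2)"
    and x_step: "\<And>t. x (Suc t) = x t + 2 *\<^sub>R (z (Suc t) - y (Suc t))"
    and t_ge: "t \<ge> 1"
  shows "merit f g \<gamma> (y t) (z t) (x t)
           \<ge> ereal (f (z t)) + g (z t) + ereal (1 / 2 * (1 / \<gamma> - L) * (norm (y t - z t))\<^sup>2)"
proof -
  obtain s where ts: "t = Suc s" using t_ge by (cases t) auto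
  define Y where "Y = y t"
  define Z where "Z = z t"
  define X where "X = x t"
  define W where "W = x s"
  have opt: "W - Y = \<gamma> *\<^sub>R f' Y"
    using optimality[OF f_grad gamma_pos y_step[of s]] unfolding W_def Y_def ts .
  have Xe: "X = W + 2 *\<^sub>R (Z - Y)" unfolding X_def W_def Z_def Y_def ts by (rule x_step)
  have desc: "f Z \<le> f Y + inner (f' Y) (Z - Y) + L / 2 * (norm (Z - Y))\<^sup>2"
    by (rule descent[OF f_grad f'_lip])
  have ip: "1 / \<gamma> * inner (X - Y) (Z - Y) = inner (f' Y) (Z - Y) + 2 / \<gamma> * (norm (Z - Y))\<^sup>2"
  proof -
    have "X - Y = \<gamma> *\<^sub>R f' Y + 2 *\<^sub>R (Z - Y)" using Xe opt by (simp add: algebra_simps)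
    hence "inner (X - Y) (Z - Y) = \<gamma> * inner (f' Y) (Z - Y) + 2 * (norm (Z - Y))\<^sup>2"
      by (simp add: inner_add_left power2_norm_eq_inner)
    thus ?thesis using gamma_pos by (simp add: field_simps)
  qed
  have nyz: "norm (Y - Z) = norm (Z - Y)" by (rule norm_minus_commute)
  have R: "f Z + 1 / 2 * (1 / \<gamma> - L) * (norm (Y - Z))\<^sup>2
      \<le> f Y + (- 3 / (2 * \<gamma>) * (norm (Y - Z))\<^sup>2 + 1 / \<gamma> * inner (X - Y) (Z - Y))"
  proof -
    have e1: "- 3 / (2 * \<gamma>) * (norm (Z - Y))\<^sup>2 + 2 / \<gamma> * (norm (Z - Y))\<^sup>2 = 1 / (2 * \<gamma>) * (norm (Z - Y))\<^sup>2"
      using gamma_pos by (simp add: field_simps)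
    have e2: "1 / 2 * (1 / \<gamma> - L) * (norm (Z - Y))\<^sup>2 = 1 / (2 * \<gamma>) * (norm (Z - Y))\<^sup>2 - L / 2 * (norm (Z - Y))\<^sup>2"
      by (simp add: left_diff_distrib right_diff_distrib)
    show ?thesis unfolding ip nyz using desc e1 e2 by linarith
  qed
  show ?thesis unfolding merit_def Y_def[symmetric] Z_def[symmetric] X_def[symmetric]
    using R by (cases "g Z") auto
qed

end
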